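(* For $1\le m\le n$, $m\,E_m\!\left[\frac1\ell\right]+\sum_{j=1}^{m-1}E_m\!\left[\frac{\tau_j}{\ell}\right]=1$.
   Context: $\mathbf X=\{X_1,\dots,X_n\}$ with the uniform measure. $\mathcal X_m$ is the set of finite sequences $\chi=(\chi_1,\dots,\chi_\ell)$ of elements of $\mathbf X$ having exactly $m$ distinct entries and with $\chi_\ell$ different from all earlier entries; $\ell(\chi)$ is its length and $\chi$ has probability $n^{-\ell(\chi)}$; $E_m[f]=\sum_{\chi\in\mathcal X_m}f(\chi)n^{-\ell(\chi)}$. For $0\le j\le m$, $t_j(\chi)$ is the least $t\ge0$ with $|\{\chi_1,\dots,\chi_t\}|=j$, and $\tau_j(\chi)=t_{j+1}(\chi)-t_j(\chi)-1$ for $1\le j\le m-1$. *)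

theory Defs
  imports "HOL-Analysis.Analysis"
begin

text \<open>The ground set X = {X_1,...,X_n} is modelled as {..<n} :: nat set.
  seqs n m is the set X_m of finite sequences over X with exactly m distinct
  entries whose last entry differs from all earlier entries.\<close>
definition seqs :: "nat \<Rightarrow> nat \<Rightarrow> nat list set" where
  "seqs n m = {xs. set xs \<subseteq> {..<n} \<and> card (set xs) = m \<and> xs \<noteq> []
                  \<and> last xs \<notin> set (butlast xs)}"

definition Em :: "nat \<Rightarrow> nat \<Rightarrow> (nat list \<Rightarrow> real) \<Rightarrow> real" where
  "Em n m f = infsum (\<lambda>xs. f xs / real n ^ length xs) (seqs n m)"

definition tt :: "nat list \<Rightarrow> nat \<Rightarrow> nat" where
  "tt xs j = (LEAST t. card (set (take t xs)) = j)"

definition tau :: "nat list \<Rightarrow> nat \<Rightarrow> nat" where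
  "tau xs j = tt xs (Suc j) - tt xs j - 1"

end

theory Submission imports Defs begin

lemma card_take_Suc: "card (set (take (Suc t) xs)) \<le> Suc (card (set (take t xs)))"
proof (cases "t < length xs")
  case True
  then have "take (Suc t) xs = take t xs @ [xs!t]" by (simp add: take_Suc_conv_app_nth)
  then show ?thesis by (simp add: card_insert_le_m1)
next
  case False then show ?thesis by simp
qed

lemma card_take_mono: "t \<le> t' \<Longrightarrow> card (set (take t xs)) \<le> card (set (take t' xs))"
  by (meson card_mono finite_set set_take_subset_set_take)

lemma exists_take_card: "j \<le> card (set xs) \<Longrightarrow> \<exists>t. card (set (take t xs)) = j"
proof (induction xs arbitrary: j rule: rev_induct)
  case Nil then show ?case by simp
next
  case (snoc x xs)
  show ?case
  proof (cases "j \<le> card (set xs)")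
    case True
    then obtain t where t: "card (set (take t xs)) = j" using snoc.IH by blast
    have "take (min t (length xs)) (xs @ [x]) = take t xs" by (auto simp: min_def)
    then show ?thesis using t by metis
  next
    case False
    then have "j = card (set (xs @ [x]))" using snoc.prems
      by (simp add: card_insert_if split: if_splits)
    then show ?thesis by (metis take_all order_refl)
  qed
qed

lemma seqs_butlast:
  assumes "xs \<in> seqs n m"
  shows "card (set (butlast xs)) = m - 1" "m \<ge> 1" "xs \<noteq> []"
proof -
  have ne: "xs \<noteq> []" and nl: "last xs \<notin> set (butlast xs)" and c: "card (set xs) = m"
    using assms by (auto simp: seqs_def)
  have "set xs = insert (last xs) (set (butlast xs))"
    using ne by (metis append_butlast_last_id set_append Un_insert_right set_simps sup_bot.right_neutral)
  then have "card (set xs) = Suc (card (set (butlast xs)))" using nl by simp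
  then show "card (set (butlast xs)) = m - 1" "m \<ge> 1" using c by auto
  show "xs \<noteq> []" by fact
qed

lemma tt_spec:
  assumes "xs \<in> seqs n m" "j \<le> m"
  shows "card (set (take (tt xs j) xs)) = j" "\<And>t. card (set (take t xs)) = j \<Longrightarrow> tt xs j \<le> t"
proof -
  have "card (set xs) = m" using assms by (auto simp: seqs_def)
  then obtain t where "card (set (take t xs)) = j" using exists_take_card assms(2) by metis
  then show "card (set (take (tt xs j) xs)) = j" unfolding tt_def by (rule LeastI)
  show "\<And>t. card (set (take t xs)) = j \<Longrightarrow> tt xs j \<le> t" unfolding tt_def by (rule Least_le)
qed

lemma tt_strict:
  assumes "xs \<in> seqs n m" "j < j'" "j' \<le> m"
  shows "tt xs j < tt xs j'"
proof (rule ccontr)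
  assume "\<not> ?thesis"
  then have "card (set (take (tt xs j') xs)) \<le> card (set (take (tt xs j) xs))"
    by (intro card_take_mono) simp
  then show False using tt_spec(1)[OF assms(1)] assms by fastforce
qed

lemma tt_one:
  assumes "xs \<in> seqs n m"
  shows "tt xs 1 = 1"
proof -
  have ne: "xs \<noteq> []" using assms by (auto simp: seqs_def)
  show ?thesis unfolding tt_def
  proof (rule Least_equality)
    show "card (set (take 1 xs)) = 1" using ne by (cases xs) auto
    show "\<And>y. card (set (take y xs)) = 1 \<Longrightarrow> 1 \<le> y"
      by (metis One_nat_def card.empty less_one not_less set_empty take_eq_Nil zero_neq_one)
  qed
qed

lemma tt_m:
  assumes "xs \<in> seqs n m"
  shows "tt xs m = length xs"
proof -
  have c: "card (set xs) = m" using assms by (auto simp: seqs_def)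
  note b = seqs_butlast[OF assms]
  show ?thesis unfolding tt_def
  proof (rule Least_equality)
    show "card (set (take (length xs) xs)) = m" using c by simp
    fix t assume t: "card (set (take t xs)) = m"
    show "length xs \<le> t"
    proof (rule ccontr)
      assume "\<not> length xs \<le> t"
      then have "t \<le> length (butlast xs)" by simp
      then have "take t xs = take t (butlast xs)"
        by (metis append_butlast_last_id b(3) take_append diff_is_0_eq take0 append_Nil2)
      then have "set (take t xs) \<subseteq> set (butlast xs)" by (simp add: set_take_subset)
      then have "card (set (take t xs)) \<le> m - 1" using b(1) by (metis card_mono finite_set)
      then show False using t b(2) by simp
    qed
  qed
qed

lemma tele:
  assumes "xs \<in> seqs n m" "1 \<le> k" "k \<le> m"
  shows "(\<Sum>j\<in>{1..<k}. tau xs j) + k = tt xs k"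
  using assms(2,3)
proof (induction k rule: dec_induct)
  case base then show ?case using tt_one[OF assms(1)] by simp
next
  case (step k)
  have "tt xs k < tt xs (Suc k)" using tt_strict[OF assms(1), of k "Suc k"] step by simp
  then show ?case using step by (simp add: tau_def)
qed

lemma ident:
  assumes "xs \<in> seqs n m"
  shows "m + (\<Sum>j=1..m-1. tau xs j) = length xs"
proof -
  have m1: "m \<ge> 1" using seqs_butlast[OF assms] by simp
  then have "{1..m-1} = {1..<m}" by auto
  then show ?thesis using tele[OF assms m1 order_refl] tt_m[OF assms] by simp
qed


definition AA :: "nat \<Rightarrow> nat \<Rightarrow> nat \<Rightarrow> nat list set" where
  "AA n m L = {xs. set xs \<subseteq> {..<n} \<and> length xs = L \<and> card (set xs) < m}"

definition SS :: "nat \<Rightarrow> nat \<Rightarrow> nat \<Rightarrow> nat list set" where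
  "SS n m L = {xs \<in> seqs n m. length xs = L}"

definition UU :: "nat \<Rightarrow> nat \<Rightarrow> nat \<Rightarrow> nat list set" where
  "UU n m L = {xs \<in> seqs n m. length xs \<le> L}"

lemma finite_AA: "finite (AA n m L)"
  by (rule finite_subset[OF _ finite_lists_length_eq[of "{..<n}" L]]) (auto simp: AA_def)

lemma finite_SS: "finite (SS n m L)"
  by (rule finite_subset[OF _ finite_lists_length_eq[of "{..<n}" L]]) (auto simp: SS_def seqs_def)

lemma finite_UU: "finite (UU n m L)"
  by (rule finite_subset[OF _ finite_lists_length_le[of "{..<n}" L]]) (auto simp: UU_def seqs_def)

lemma step_sets:
  "SS n m (Suc L) \<union> AA n m (Suc L) = (\<lambda>(xs,x). xs @ [x]) ` (AA n m L \<times> {..<n})"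
proof (intro equalityI subsetI)
  fix ys assume ys: "ys \<in> SS n m (Suc L) \<union> AA n m (Suc L)"
  then have "ys \<noteq> []" by (auto simp: SS_def AA_def)
  then obtain xs x where yx: "ys = xs @ [x]" by (metis rev_exhaust)
  have "xs \<in> AA n m L \<and> x < n"
  proof (cases "ys \<in> SS n m (Suc L)")
    case True
    then have "x \<notin> set xs" "card (insert x (set xs)) = m" "set xs \<subseteq> {..<n}" "x < n" "length xs = L"
      by (auto simp: SS_def seqs_def yx)
    then show ?thesis by (auto simp: AA_def)
  next
    case False
    then have A: "ys \<in> AA n m (Suc L)" using ys by auto
    then have "card (insert x (set xs)) < m" "set xs \<subseteq> {..<n}" "x < n" "length xs = L"
      by (auto simp: AA_def yx)
    moreover have "card (set xs) \<le> card (insert x (set xs))" by (simp add: card_mono subset_insertI)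
    ultimately show ?thesis by (auto simp: AA_def)
  qed
  then show "ys \<in> (\<lambda>(xs,x). xs @ [x]) ` (AA n m L \<times> {..<n})" using yx by auto
next
  fix ys assume "ys \<in> (\<lambda>(xs,x). xs @ [x]) ` (AA n m L \<times> {..<n})"
  then obtain xs x where yx: "ys = xs @ [x]" and xs: "xs \<in> AA n m L" and x: "x < n" by auto
  have s: "set xs \<subseteq> {..<n}" "length xs = L" "card (set xs) < m" using xs by (auto simp: AA_def)
  show "ys \<in> SS n m (Suc L) \<union> AA n m (Suc L)"
  proof (cases "x \<in> set xs")
    case True
    then have "set ys = set xs" using yx by auto
    then show ?thesis using s x yx by (auto simp: AA_def)
  next
    case False
    then have c: "card (set ys) = Suc (card (set xs))" using yx by simp
    show ?thesis
    proof (cases "Suc (card (set xs)) < m")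
      case True then show ?thesis using s x yx c by (auto simp: AA_def)
    next
      case False
      then have "card (set ys) = m" using c s by simp
      then show ?thesis using s x yx \<open>x \<notin> set xs\<close> by (auto simp: SS_def seqs_def)
    qed
  qed
qed

lemma step_card: "card (SS n m (Suc L)) + card (AA n m (Suc L)) = card (AA n m L) * n"
proof -
  have d: "SS n m (Suc L) \<inter> AA n m (Suc L) = {}" by (auto simp: SS_def AA_def seqs_def)
  have "card (SS n m (Suc L)) + card (AA n m (Suc L)) = card (SS n m (Suc L) \<union> AA n m (Suc L))"
    using d by (simp add: card_Un_disjoint finite_SS finite_AA)
  also have "\<dots> = card ((\<lambda>(xs,x). xs @ [x]) ` (AA n m L \<times> {..<n}))" by (simp add: step_sets)
  also have "\<dots> = card (AA n m L \<times> {..<n})"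
    by (rule card_image) (auto simp: inj_on_def)
  also have "\<dots> = card (AA n m L) * n" by (simp add: card_cartesian_product)
  finally show ?thesis .
qed

definition gg :: "nat \<Rightarrow> nat list \<Rightarrow> real" where
  "gg n xs = 1 / real n ^ length xs"

lemma FG:
  assumes "n > 0" "m \<ge> 1"
  shows "sum (gg n) (UU n m L) + real (card (AA n m L)) / real n ^ L = 1"
proof (induction L)
  case 0
  have "UU n m 0 = {}" by (auto simp: UU_def seqs_def)
  moreover have "AA n m 0 = {[]}" using assms by (auto simp: AA_def)
  ultimately show ?case by simp
next
  case (Suc L)
  have u: "UU n m (Suc L) = UU n m L \<union> SS n m (Suc L)" by (auto simp: UU_def SS_def)
  have d: "UU n m L \<inter> SS n m (Suc L) = {}" by (auto simp: UU_def SS_def)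
  have s: "sum (gg n) (SS n m (Suc L)) = real (card (SS n m (Suc L))) / real n ^ Suc L"
    by (simp add: gg_def SS_def)
  have c: "real (card (SS n m (Suc L))) + real (card (AA n m (Suc L))) = real (card (AA n m L)) * real n"
    using step_card[of n m L] by (metis of_nat_add of_nat_mult)
  have "sum (gg n) (UU n m (Suc L)) + real (card (AA n m (Suc L))) / real n ^ Suc L
      = sum (gg n) (UU n m L) + (real (card (SS n m (Suc L))) + real (card (AA n m (Suc L)))) / real n ^ Suc L"
    using u d s by (simp add: sum.union_disjoint finite_UU finite_SS add_divide_distrib)
  also have "\<dots> = sum (gg n) (UU n m L) + real (card (AA n m L)) / real n ^ L"
    using c assms(1) by simp
  finally show ?case using Suc by simp
qed

lemma AA_bound:
  assumes "m \<le> n"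
  shows "card (AA n m L) \<le> n * (n - 1) ^ L"
proof -
  have "AA n m L \<subseteq> (\<Union>a\<in>{..<n}. {xs. set xs \<subseteq> {..<n} - {a} \<and> length xs = L})"
  proof
    fix xs assume "xs \<in> AA n m L"
    then have s: "set xs \<subseteq> {..<n}" "length xs = L" "card (set xs) < m" by (auto simp: AA_def)
    then have "set xs \<noteq> {..<n}" using assms by auto
    then obtain a where "a < n" "a \<notin> set xs" using s by auto
    then show "xs \<in> (\<Union>a\<in>{..<n}. {xs. set xs \<subseteq> {..<n} - {a} \<and> length xs = L})" using s by auto
  qed
  then have "card (AA n m L) \<le> card (\<Union>a\<in>{..<n}. {xs. set xs \<subseteq> {..<n} - {a} \<and> length xs = L})"
    by (intro card_mono) (auto intro: finite_lists_length_eq)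
  also have "\<dots> \<le> (\<Sum>a\<in>{..<n}. card {xs. set xs \<subseteq> {..<n} - {a} \<and> length xs = L})"
    by (rule card_UN_le) simp
  also have "\<dots> = (\<Sum>a\<in>{..<n}. (n - 1) ^ L)"
    by (intro sum.cong refl) (simp add: card_lists_length_eq)
  also have "\<dots> = n * (n - 1) ^ L" by simp
  finally show ?thesis .
qed

lemma G_lim:
  assumes "1 \<le> m" "m \<le> n"
  shows "(\<lambda>L. real (card (AA n m L)) / real n ^ L) \<longlonglongrightarrow> 0"
proof (rule Lim_null_comparison)
  have n: "n > 0" using assms by simp
  show "\<forall>\<^sub>F L in sequentially. norm (real (card (AA n m L)) / real n ^ L) \<le> real n * ((real n - 1) / real n) ^ L"
  proof (rule always_eventually, rule allI)
    fix L
    have "real (card (AA n m L)) \<le> real n * (real n - 1) ^ L"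
    proof -
      have "real (card (AA n m L)) \<le> real (n * (n - 1) ^ L)"
        using AA_bound[OF assms(2), of L] by (simp only: of_nat_le_iff)
      also have "\<dots> = real n * (real n - 1) ^ L" using n by (simp add: of_nat_diff)
      finally show ?thesis .
    qed
    then show "norm (real (card (AA n m L)) / real n ^ L) \<le> real n * ((real n - 1) / real n) ^ L"
      using n by (simp add: power_divide divide_right_mono)
  qed
  have "((\<lambda>L. ((real n - 1) / real n) ^ L) \<longlonglongrightarrow> 0)"
    by (rule LIMSEQ_power_zero) (use n in auto)
  then show "(\<lambda>L. real n * ((real n - 1) / real n) ^ L) \<longlonglongrightarrow> 0"
    by (simp add: tendsto_mult_right_zero)
qed


lemma gg_nonneg: "0 \<le> gg n xs" by (simp add: gg_def)

lemma partial_le1: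
  assumes "1 \<le> m" "m \<le> n" "finite B" "B \<subseteq> seqs n m"
  shows "sum (gg n) B \<le> 1"
proof -
  define L where "L = Max (insert 0 (length ` B))"
  have "B \<subseteq> UU n m L" using assms(3,4) by (auto simp: UU_def L_def)
  then have "sum (gg n) B \<le> sum (gg n) (UU n m L)"
    by (intro sum_mono2 finite_UU gg_nonneg)
  also have "\<dots> \<le> 1"
  proof -
    have "0 \<le> real (card (AA n m L)) / real n ^ L" by simp
    then show ?thesis using FG[of n m L] assms by linarith
  qed
  finally show ?thesis .
qed

lemma dom_summable:
  assumes "1 \<le> m" "m \<le> n" "\<And>x. x \<in> seqs n m \<Longrightarrow> 0 \<le> f x \<and> f x \<le> gg n x"
  shows "f summable_on seqs n m"
proof (rule nonneg_bdd_above_summable_on)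
  show "\<And>x. x \<in> seqs n m \<Longrightarrow> 0 \<le> f x" using assms(3) by blast
  show "bdd_above (sum f ` {F. F \<subseteq> seqs n m \<and> finite F})"
  proof (rule bdd_aboveI2)
    fix F assume F: "F \<in> {F. F \<subseteq> seqs n m \<and> finite F}"
    then have "sum f F \<le> sum (gg n) F" using assms(3) by (intro sum_mono) auto
    also have "\<dots> \<le> 1" using F assms partial_le1 by auto
    finally show "sum f F \<le> 1" .
  qed
qed

lemma gg_sum1:
  assumes "1 \<le> m" "m \<le> n"
  shows "infsum (gg n) (seqs n m) = 1"
proof (rule antisym)
  have bdd: "bdd_above (sum (gg n) ` {F. F \<subseteq> seqs n m \<and> finite F})"
    by (rule bdd_aboveI2[where M=1]) (use assms partial_le1 in auto)
  have "infsum (gg n) (seqs n m) = (SUP F\<in>{F. finite F \<and> F\<subseteq>seqs n m}. sum (gg n) F)"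
    by (rule nonneg_bdd_above_infsum) (use gg_nonneg bdd in auto)
  also have "\<dots> \<le> 1"
    by (rule cSUP_least) (use assms partial_le1 in auto)
  finally show "infsum (gg n) (seqs n m) \<le> 1" .
  have sm: "gg n summable_on seqs n m" by (rule dom_summable) (use assms gg_nonneg in auto)
  have le: "sum (gg n) (UU n m L) \<le> infsum (gg n) (seqs n m)" for L
    by (rule finite_sum_le_infsum) (use sm finite_UU gg_nonneg in \<open>auto simp: UU_def\<close>)
  have "(\<lambda>L. 1 - real (card (AA n m L)) / real n ^ L) \<longlonglongrightarrow> 1 - 0"
    by (intro tendsto_diff tendsto_const G_lim assms)
  moreover have "sum (gg n) (UU n m L) = 1 - real (card (AA n m L)) / real n ^ L" for L
    using FG[of n m L] assms by simp
  ultimately have "(\<lambda>L. sum (gg n) (UU n m L)) \<longlonglongrightarrow> 1" by simp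
  then show "1 \<le> infsum (gg n) (seqs n m)"
    by (rule LIMSEQ_le_const2) (use le in auto)
qed

lemma infsum_sum_fin:
  fixes f :: "nat \<Rightarrow> 'a \<Rightarrow> real"
  assumes "finite J" "\<And>j. j \<in> J \<Longrightarrow> f j summable_on A"
  shows "(\<lambda>x. \<Sum>j\<in>J. f j x) summable_on A \<and> infsum (\<lambda>x. \<Sum>j\<in>J. f j x) A = (\<Sum>j\<in>J. infsum (f j) A)"
  using assms
proof (induction J rule: finite_induct)
  case empty then show ?case by simp
next
  case (insert j J)
  then have IH: "(\<lambda>x. \<Sum>j\<in>J. f j x) summable_on A" "infsum (\<lambda>x. \<Sum>j\<in>J. f j x) A = (\<Sum>j\<in>J. infsum (f j) A)"
    by auto
  have fj: "f j summable_on A" using insert by auto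
  show ?case using insert(1,2) IH fj
    by (simp add: summable_on_add infsum_add)
qed

theorem mainTheorem10:
  fixes n m :: nat
  assumes "1 \<le> m" and "m \<le> n"
  shows "real m * Em n m (\<lambda>xs. 1 / real (length xs))
         + (\<Sum>j=1..m-1. Em n m (\<lambda>xs. real (tau xs j) / real (length xs))) = 1"
proof -
  define h where "h (xs :: nat list) = 1 / real (length xs) / real n ^ length xs" for xs
  define k where "k j xs = real (tau xs j) / real (length xs) / real n ^ length xs" for j xs
  have len: "length xs \<ge> 1" if "xs \<in> seqs n m" for xs using that by (cases xs) (auto simp: seqs_def)
  have hs: "h summable_on seqs n m"
  proof (rule dom_summable[OF assms])
    fix x assume x: "x \<in> seqs n m"
    have le1: "1 / real (length x) \<le> 1" using len[OF x] by (simp add: divide_le_eq)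
    have hx: "h x = (1 / real (length x)) * gg n x" by (simp add: h_def gg_def)
    have a: "0 \<le> 1 / real (length x)" by simp
    have "(1 / real (length x)) * gg n x \<le> gg n x" by (rule mult_left_le_one_le[OF gg_nonneg a le1])
    then show "0 \<le> h x \<and> h x \<le> gg n x"
      by (metis hx a gg_nonneg mult_nonneg_nonneg)
  qed
  have ks: "k j summable_on seqs n m" if j: "j \<in> {1..m-1}" for j
  proof (rule dom_summable[OF assms])
    fix x assume x: "x \<in> seqs n m"
    have "tau x j \<le> (\<Sum>j=1..m-1. tau x j)" using j by (intro member_le_sum) auto
    also have "\<dots> \<le> length x" using ident[OF x] by simp
    finally have le1: "real (tau x j) / real (length x) \<le> 1" using len[OF x] by (simp add: divide_le_eq)
    have hx: "k j x = (real (tau x j) / real (length x)) * gg n x" by (simp add: k_def gg_def)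
    have a: "0 \<le> real (tau x j) / real (length x)" by simp
    have "(real (tau x j) / real (length x)) * gg n x \<le> gg n x" by (rule mult_left_le_one_le[OF gg_nonneg a le1])
    then show "0 \<le> k j x \<and> k j x \<le> gg n x"
      by (metis hx a gg_nonneg mult_nonneg_nonneg)
  qed
  note S = infsum_sum_fin[of "{1..m-1}" k "seqs n m", OF _ ks]
  have "real m * Em n m (\<lambda>xs. 1 / real (length xs))
         + (\<Sum>j=1..m-1. Em n m (\<lambda>xs. real (tau xs j) / real (length xs)))
      = real m * infsum h (seqs n m) + (\<Sum>j=1..m-1. infsum (k j) (seqs n m))"
    by (simp add: Em_def h_def[abs_def] k_def[abs_def])
  also have "\<dots> = infsum (\<lambda>x. real m * h x) (seqs n m) + infsum (\<lambda>x. \<Sum>j=1..m-1. k j x) (seqs n m)"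
    using S by (simp add: infsum_cmult_right')
  also have "\<dots> = infsum (\<lambda>x. real m * h x + (\<Sum>j=1..m-1. k j x)) (seqs n m)"
    by (rule infsum_add[symmetric]) (use S hs summable_on_cmult_right in auto)
  also have "\<dots> = infsum (gg n) (seqs n m)"
  proof (rule infsum_cong)
    fix x assume x: "x \<in> seqs n m"
    have "real m + real (\<Sum>j=1..m-1. tau x j) = real (length x)"
      using ident[OF x] by (metis of_nat_add)
    then have e: "real m + (\<Sum>j=1..m-1. real (tau x j)) = real (length x)" by simp
    have "real m * h x + (\<Sum>j=1..m-1. k j x)
        = (real m + (\<Sum>j=1..m-1. real (tau x j))) / real (length x) / real n ^ length x"
      unfolding h_def k_def by (simp add: sum_divide_distrib add_divide_distrib)
    also have "\<dots> = gg n x" using e len[OF x] by (cases x) (simp_all add: gg_def)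
    finally show "real m * h x + (\<Sum>j=1..m-1. k j x) = gg n x" .
  qed
  also have "\<dots> = 1" by (rule gg_sum1[OF assms])
  finally show ?thesis .
qed

end
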